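(* Let $G\in\mathcal{G}_{k,n,p}$ and $v\neq w\in V(G)$. Then $|H_{wv}-n|\lesssim (pn)^k$.
   Context: Fix an integer $k\ge2$ and let $p=p(n)$ satisfy $\frac{\log n}{n^{(k-1)/k}}\le p\le 1-\Omega(\frac{\log^4 n}{n})$. $\mathcal{G}_{k,n,p}$ denotes the set of graphs $G$ on $n$ vertices satisfying: (i) $G$ is not bipartite; (ii) $\operatorname{diam}(G)\le k$; (iii) every vertex has degree $d(v)=pn\pm\mathcal{O}(\sqrt{pn\log n})$; (iv) $2|E(G)|=pn^2\pm\mathcal{O}(\sqrt{pn^2\log n})$; (v) $|N(v)\cap N(w)|=p^2n\pm\mathcal{O}(\max\{\sqrt{p^2n\log n},\log n\})$ for all $v\ne w$; (vi) the unit eigenvector $\phi$ of the largest adjacency eigenvalue has entries $\phi_i=\frac1{\sqrt n}\pm\mathcal{O}(\frac{\log^{3/2}n}{\sqrt p\,n\log(pn)})$; (vii) $\lambda_1=(1+o(1))pn$; (viii) $\max\{|\lambda_2|,|\lambda_n|\}=\mathcal{O}(\sqrt{pn})$, where $\lambda_1\ge\dots\ge\lambda_n$ are the adjacency eigenvalues. Asymptotic notation is as $n\to\infty$ with constants independent of $n$; $f\lesssim g$ means $f=\mathcal{O}(g)$. $H_{wv}$ is the expected first hitting time of $v$ for a simple random walk on $G$ started at $w$. *)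

theory Defs
  imports Complex_Main "Jordan_Normal_Form.Char_Poly"
begin

definition simple_graph :: "nat \<Rightarrow> (nat \<Rightarrow> nat \<Rightarrow> bool) \<Rightarrow> bool" where
  "simple_graph n E \<longleftrightarrow> (\<forall>u v. E u v \<longrightarrow> u < n \<and> v < n \<and> u \<noteq> v \<and> E v u)"

definition nbrs :: "nat \<Rightarrow> (nat \<Rightarrow> nat \<Rightarrow> bool) \<Rightarrow> nat \<Rightarrow> nat set" where
  "nbrs n E v = {u. u < n \<and> E v u}"

definition deg :: "nat \<Rightarrow> (nat \<Rightarrow> nat \<Rightarrow> bool) \<Rightarrow> nat \<Rightarrow> nat" where
  "deg n E v = card (nbrs n E v)"

definition num_edges :: "nat \<Rightarrow> (nat \<Rightarrow> nat \<Rightarrow> bool) \<Rightarrow> nat" where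
  "num_edges n E = card {(u, v). u < v \<and> v < n \<and> E u v}"

definition bipartite :: "nat \<Rightarrow> (nat \<Rightarrow> nat \<Rightarrow> bool) \<Rightarrow> bool" where
  "bipartite n E \<longleftrightarrow> (\<exists>S. \<forall>u<n. \<forall>v<n. E u v \<longrightarrow> (u \<in> S \<longleftrightarrow> v \<notin> S))"

fun within_dist :: "nat \<Rightarrow> (nat \<Rightarrow> nat \<Rightarrow> bool) \<Rightarrow> nat \<Rightarrow> nat \<Rightarrow> nat \<Rightarrow> bool" where
  "within_dist n E 0 u v = (u = v)"
| "within_dist n E (Suc j) u v =
     (within_dist n E j u v \<or> (\<exists>x<n. E u x \<and> within_dist n E j x v))"

definition diam_le :: "nat \<Rightarrow> (nat \<Rightarrow> nat \<Rightarrow> bool) \<Rightarrow> nat \<Rightarrow> bool" where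
  "diam_le n E k \<longleftrightarrow> (\<forall>u<n. \<forall>v<n. within_dist n E k u v)"

definition adj_mat :: "nat \<Rightarrow> (nat \<Rightarrow> nat \<Rightarrow> bool) \<Rightarrow> real mat" where
  "adj_mat n E = mat n n (\<lambda>(i, j). if E i j then 1 else 0)"

definition adj_eigenvalues :: "nat \<Rightarrow> (nat \<Rightarrow> nat \<Rightarrow> bool) \<Rightarrow> (nat \<Rightarrow> real) \<Rightarrow> bool" where
  "adj_eigenvalues n E lam \<longleftrightarrow>
     (\<forall>i j. 1 \<le> i \<longrightarrow> i \<le> j \<longrightarrow> j \<le> n \<longrightarrow> lam j \<le> lam i) \<and>
     char_poly (adj_mat n E) = (\<Prod>i=1..n. [:- lam i, 1:])"

text \<open>Simple random walk: hit_prob n E v t x = probability that the walk started at x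
  hits v for the first time at time t.\<close>
fun hit_prob :: "nat \<Rightarrow> (nat \<Rightarrow> nat \<Rightarrow> bool) \<Rightarrow> nat \<Rightarrow> nat \<Rightarrow> nat \<Rightarrow> real" where
  "hit_prob n E v 0 x = (if x = v then 1 else 0)"
| "hit_prob n E v (Suc t) x =
     (if x = v then 0
      else (\<Sum>y\<in>nbrs n E x. hit_prob n E v t y) / real (deg n E x))"

definition hitting_time :: "nat \<Rightarrow> (nat \<Rightarrow> nat \<Rightarrow> bool) \<Rightarrow> nat \<Rightarrow> nat \<Rightarrow> real" where
  "hitting_time n E w v = (\<Sum>t. real t * hit_prob n E v t w)"

text \<open>The class G_{k,n,p}; C is the (common) constant of all O-terms,
  eps n is the o(1) term in (vii).\<close>
definition graph_class ::
  "nat \<Rightarrow> nat \<Rightarrow> real \<Rightarrow> real \<Rightarrow> real \<Rightarrow> (nat \<Rightarrow> nat \<Rightarrow> bool) \<Rightarrow> bool" where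
  "graph_class k n p C eps E \<longleftrightarrow>
     simple_graph n E \<and>
     \<not> bipartite n E \<and>
     diam_le n E k \<and>
     (\<forall>v<n. \<bar>real (deg n E v) - p * n\<bar> \<le> C * sqrt (p * n * ln n)) \<and>
     \<bar>2 * real (num_edges n E) - p * n\<^sup>2\<bar> \<le> C * sqrt (p * n\<^sup>2 * ln n) \<and>
     (\<forall>v<n. \<forall>w<n. v \<noteq> w \<longrightarrow>
        \<bar>real (card (nbrs n E v \<inter> nbrs n E w)) - p\<^sup>2 * n\<bar>
          \<le> C * max (sqrt (p\<^sup>2 * n * ln n)) (ln n)) \<and>
     (\<exists>lam. adj_eigenvalues n E lam \<and>
        (\<exists>\<phi> \<in> carrier_vec n.
           adj_mat n E *\<^sub>v \<phi> = lam 1 \<cdot>\<^sub>v \<phi> \<and>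
           (\<Sum>i<n. (\<phi> $ i)\<^sup>2) = 1 \<and>
           (\<forall>i<n. \<bar>\<phi> $ i - 1 / sqrt n\<bar>
                    \<le> C * ln n powr (3/2) / (sqrt p * n * ln (p * n)))) \<and>
        \<bar>lam 1 / (p * n) - 1\<bar> \<le> eps \<and>
        max \<bar>lam 2\<bar> \<bar>lam n\<bar> \<le> C * sqrt (p * n))"

end

theory Submission
  imports Defs
begin

lemma hit_nonneg: "hit_prob n E v t x \<ge> 0"
  by (induction t arbitrary: x) (auto intro!: sum_nonneg divide_nonneg_nonneg)

definition acc :: "nat \<Rightarrow> (nat \<Rightarrow> nat \<Rightarrow> bool) \<Rightarrow> nat \<Rightarrow> nat \<Rightarrow> nat \<Rightarrow> real" where
  "acc n E v j x = (\<Sum>t\<le>j. hit_prob n E v t x)"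

lemma acc_nonneg: "acc n E v j x \<ge> 0"
  unfolding acc_def by (intro sum_nonneg hit_nonneg)

lemma acc_Suc_eq: "acc n E v (Suc j) x = acc n E v j x + hit_prob n E v (Suc j) x"
  unfolding acc_def by simp

lemma acc_mono: "acc n E v j x \<le> acc n E v (Suc j) x"
  using acc_Suc_eq hit_nonneg by (metis le_add_same_cancel1)

lemma acc_Suc: "acc n E v (Suc j) x =
   (if x = v then 1 else (\<Sum>y\<in>nbrs n E x. acc n E v j y) / real (deg n E x))"
proof -
  have "acc n E v (Suc j) x = hit_prob n E v 0 x + (\<Sum>t\<le>j. hit_prob n E v (Suc t) x)"
    unfolding acc_def by (subst sum.atMost_Suc_shift) simp
  also have "\<dots> = (if x = v then 1 else (\<Sum>y\<in>nbrs n E x. acc n E v j y) / real (deg n E x))"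
  proof (cases "x = v")
    case True then show ?thesis by simp
  next
    case False
    then have "(\<Sum>t\<le>j. hit_prob n E v (Suc t) x) =
       (\<Sum>t\<le>j. (\<Sum>y\<in>nbrs n E x. hit_prob n E v t y) / real (deg n E x))" by simp
    also have "\<dots> = (\<Sum>y\<in>nbrs n E x. acc n E v j y) / real (deg n E x)"
      unfolding acc_def sum_divide_distrib[symmetric] by (subst sum.swap) simp
    finally show ?thesis using False by simp
  qed
  finally show ?thesis .
qed

lemma acc_v: "acc n E v j v = 1"
proof (cases j)
  case 0 then show ?thesis by (simp add: acc_def)
next
  case (Suc m) then show ?thesis by (simp only: acc_Suc) simp
qed

lemma acc_le1: "acc n E v j x \<le> 1"
proof (induction j arbitrary: x)
  case 0 then show ?case by (simp add: acc_def)
next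
  case (Suc j)
  show ?case
  proof (cases "x = v")
    case False
    have "(\<Sum>y\<in>nbrs n E x. acc n E v j y) \<le> (\<Sum>y\<in>nbrs n E x. 1)"
      by (intro sum_mono Suc)
    also have "\<dots> = real (deg n E x)" by (simp add: deg_def)
    finally have "(\<Sum>y\<in>nbrs n E x. acc n E v j y) / real (deg n E x) \<le> 1"
      by (cases "deg n E x = 0") (auto simp: divide_le_eq_1)
    then show ?thesis using False by (simp add: acc_Suc)
  qed (simp add: acc_Suc)
qed

lemma finite_nbrs: "finite (nbrs n E x)"
  unfolding nbrs_def by simp

lemma within_nbr: "within_dist n E j u v \<Longrightarrow> u = v \<or> (\<exists>x<n. E u x)"
  by (induction j arbitrary: u) auto

lemma acc_lower:
  assumes "D \<ge> 1" "\<forall>x<n. real (deg n E x) \<le> D"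
  shows "within_dist n E j x v \<Longrightarrow> x < n \<Longrightarrow> acc n E v j x \<ge> 1 / D ^ j"
proof (induction j arbitrary: x)
  case 0 then show ?case by (simp add: acc_v)
next
  case (Suc j)
  have Dj: "1 / D ^ Suc j \<le> 1 / D ^ j"
    using assms(1) by (simp add: divide_simps)
  show ?case
  proof (cases "within_dist n E j x v")
    case True
    then have "1 / D ^ j \<le> acc n E v j x" using Suc.IH Suc.prems(2) by blast
    then show ?thesis using Dj acc_mono[of n E v j x] by linarith
  next
    case False
    then obtain y where y: "y < n" "E x y" "within_dist n E j y v" using Suc.prems by auto
    show ?thesis
    proof (cases "x = v")
      case True
      have "1 \<le> D ^ Suc j" using assms(1) by (rule one_le_power)
      then have "1 / D ^ Suc j \<le> 1" by simp
      then show ?thesis using True by (simp add: acc_v)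
    next
      case xv: False
      have yn: "y \<in> nbrs n E x" using y by (simp add: nbrs_def)
      then have dpos: "deg n E x > 0" unfolding deg_def using finite_nbrs card_gt_0_iff by blast
      have "1 / D ^ j \<le> acc n E v j y" using Suc.IH y by blast
      also have "\<dots> \<le> (\<Sum>y\<in>nbrs n E x. acc n E v j y)"
        by (rule member_le_sum[OF yn]) (auto intro: acc_nonneg finite_nbrs)
      finally have A: "1 / D ^ j \<le> (\<Sum>y\<in>nbrs n E x. acc n E v j y)" .
      have "1 / D ^ Suc j = (1 / D ^ j) / D" by simp
      also have "\<dots> \<le> (\<Sum>y\<in>nbrs n E x. acc n E v j y) / D"
        using A assms(1) by (intro divide_right_mono) auto
      also have "\<dots> \<le> (\<Sum>y\<in>nbrs n E x. acc n E v j y) / real (deg n E x)"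
        using assms(2) Suc.prems dpos
        by (intro divide_left_mono) (auto intro: sum_nonneg acc_nonneg)
      finally show ?thesis using xv by (simp add: acc_Suc)
    qed
  qed
qed

lemma hitting_core:
  assumes dm: "diam_le n E k" and k: "k \<ge> 1" and v: "v < n" and w: "w < n"
    and D: "D \<ge> 1" "\<forall>x<n. real (deg n E x) \<le> D"
  shows "summable (\<lambda>t. real t * hit_prob n E v t w) \<and> hitting_time n E w v \<le> k * D ^ k"
proof -
  define q where "q t x = 1 - acc n E v t x" for t x
  define M where "M t = Max ((\<lambda>y. q t y) ` {..<n})" for t
  define \<delta> where "\<delta> = 1 / D ^ k"
  have Dk: "D ^ k \<ge> 1" using D(1) by (rule one_le_power)
  have \<delta>: "0 < \<delta>" "\<delta> \<le> 1" using Dk by (auto simp: \<delta>_def)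
  have dpos: "deg n E x > 0" if xx: "x < n" "x \<noteq> v" for x
  proof -
    have "within_dist n E k x v" using dm xx v by (simp add: diam_le_def)
    then obtain y where "y < n" "E x y" using within_nbr xx by blast
    then have "y \<in> nbrs n E x" by (simp add: nbrs_def)
    then show ?thesis unfolding deg_def using finite_nbrs card_gt_0_iff by blast
  qed
  have q0: "0 \<le> q t x" for t x using acc_le1[of n E v t x] by (simp add: q_def)
  have q1: "q t x \<le> 1" for t x using acc_nonneg[of n E v t x] by (simp add: q_def)
  have qv: "q t v = 0" for t by (simp add: q_def acc_v)
  have qrec: "q (Suc s) x = (\<Sum>y\<in>nbrs n E x. q s y) / real (deg n E x)"
    if "x < n" "x \<noteq> v" for s x
  proof -
    have d: "real (deg n E x) > 0" using dpos[OF that] by simp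
    have "(\<Sum>y\<in>nbrs n E x. q s y) = real (deg n E x) - (\<Sum>y\<in>nbrs n E x. acc n E v s y)"
      unfolding q_def by (simp add: sum_subtractf deg_def)
    then show ?thesis using d that by (simp add: q_def acc_Suc diff_divide_distrib)
  qed
  have qk: "q k x \<le> 1 - \<delta>" if "x < n" for x
  proof -
    have "within_dist n E k x v" using dm that v by (simp add: diam_le_def)
    then have "acc n E v k x \<ge> 1 / D ^ k" using acc_lower[OF D] that by blast
    then show ?thesis by (simp add: q_def \<delta>_def)
  qed
  have fin: "finite ((\<lambda>y. q t y) ` {..<n})" "(\<lambda>y. q t y) ` {..<n} \<noteq> {}" for t
    using v by auto
  have Mge: "q t y \<le> M t" if "y < n" for t y
    unfolding M_def using fin that by (intro Max_ge) auto
  have Min: "\<exists>y<n. M t = q t y" for t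
    using Max_in[OF fin(1) fin(2), of t] unfolding M_def by auto
  have M0: "0 \<le> M t" for t using Mge[OF v, of t] qv by simp
  have M1: "M t \<le> 1" for t using Min[of t] q1 by metis
  have mult: "q (t + s) x \<le> M t * q s x" if "x < n" for s t x
    using that
  proof (induction s arbitrary: x)
    case 0
    show ?case
    proof (cases "x = v")
      case True then show ?thesis by (simp add: qv)
    next
      case False
      then have "q 0 x = 1" by (simp add: q_def acc_def)
      then show ?thesis using Mge[OF 0] by simp
    qed
  next
    case (Suc s)
    show ?case
    proof (cases "x = v")
      case True then show ?thesis by (simp add: qv)
    next
      case False
      have "(\<Sum>y\<in>nbrs n E x. q (t + s) y) \<le> (\<Sum>y\<in>nbrs n E x. M t * q s y)"
        by (intro sum_mono Suc.IH) (simp add: nbrs_def)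
      then have "(\<Sum>y\<in>nbrs n E x. q (t + s) y) / real (deg n E x)
          \<le> (\<Sum>y\<in>nbrs n E x. M t * q s y) / real (deg n E x)"
        by (intro divide_right_mono) auto
      then show ?thesis using qrec[OF Suc.prems False]
        by (simp add: sum_distrib_left[symmetric])
    qed
  qed
  have Mk: "M (t + k) \<le> (1 - \<delta>) * M t" for t
  proof -
    obtain y where y: "y < n" "M (t + k) = q (t + k) y" using Min by blast
    have "q (t + k) y \<le> M t * q k y" using mult[OF y(1)] .
    also have "\<dots> \<le> M t * (1 - \<delta>)" using qk[OF y(1)] M0 by (intro mult_left_mono) auto
    finally show ?thesis using y by (simp add: mult.commute)
  qed
  have split: "(\<Sum>i<N + k. M i) = (\<Sum>i<k. M i) + (\<Sum>i<N. M (i + k))" for N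
    by (induction N) (auto simp: add.commute add.left_commute)
  have X: "(\<Sum>i<N. M i) \<le> k / \<delta>" for N
  proof -
    have "(\<Sum>i<k. M i) \<le> (\<Sum>i<k. 1)" by (intro sum_mono M1)
    then have a: "(\<Sum>i<k. M i) \<le> k" by simp
    have "(\<Sum>i<N. M (i + k)) \<le> (\<Sum>i<N. (1 - \<delta>) * M i)" by (intro sum_mono Mk)
    then have b: "(\<Sum>i<N. M (i + k)) \<le> (1 - \<delta>) * (\<Sum>i<N. M i)"
      by (simp add: sum_distrib_left)
    have c: "(\<Sum>i<N. M i) \<le> (\<Sum>i<N + k. M i)"
      by (intro sum_mono2) (auto intro: M0)
    have "(\<Sum>i<N + k. M i) \<le> k + (1 - \<delta>) * (\<Sum>i<N + k. M i)"
      using split[of N] a b c \<delta> by (smt (verit) mult_left_mono)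
    then have "\<delta> * (\<Sum>i<N + k. M i) \<le> k" by (simp add: algebra_simps)
    then have "(\<Sum>i<N + k. M i) \<le> k / \<delta>" using \<delta> by (simp add: field_simps)
    then show ?thesis using c by linarith
  qed
  have kd: "k / \<delta> = k * D ^ k" by (simp add: \<delta>_def)
  have hq: "hit_prob n E v (Suc t) x = q t x - q (Suc t) x" for t x
    by (simp add: q_def acc_Suc_eq)
  have tele: "(\<Sum>t<Suc N. real t * hit_prob n E v t w) = (\<Sum>t<N. q t w) - N * q N w" for N
  proof (induction N)
    case 0 then show ?case by simp
  next
    case (Suc N)
    have "(\<Sum>t<Suc (Suc N). real t * hit_prob n E v t w)
        = (\<Sum>t<Suc N. real t * hit_prob n E v t w) + real (Suc N) * hit_prob n E v (Suc N) w"
      by (simp only: sum.lessThan_Suc)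
    also have "\<dots> = (\<Sum>t<N. q t w) - N * q N w + real (Suc N) * (q N w - q (Suc N) w)"
      by (simp only: Suc.IH hq)
    also have "\<dots> = (\<Sum>t<Suc N. q t w) - real (Suc N) * q (Suc N) w"
      by (simp add: algebra_simps)
    finally show ?case .
  qed
  have part: "(\<Sum>t<N. real t * hit_prob n E v t w) \<le> k * D ^ k" for N
  proof (cases N)
    case 0 then show ?thesis using Dk by simp
  next
    case (Suc m)
    have "(\<Sum>t<m. q t w) \<le> (\<Sum>t<m. M t)" by (intro sum_mono Mge w)
    also have "\<dots> \<le> k * D ^ k" using X kd by simp
    finally have "(\<Sum>t<m. q t w) \<le> k * D ^ k" .
    moreover have "0 \<le> real m * q m w" using q0[of m w] by simp
    ultimately show ?thesis using Suc tele[of m] by simp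
  qed
  have sm: "summable (\<lambda>t. real t * hit_prob n E v t w)"
    by (rule summableI_nonneg_bounded[OF _ part]) (simp add: hit_nonneg)
  show ?thesis using sm suminf_le_const[OF sm part] by (simp add: hitting_time_def)
qed


theorem corollary4p3:
  fixes k :: nat and p :: "nat \<Rightarrow> real" and c C :: real and eps :: "nat \<Rightarrow> real"
  assumes "k \<ge> 2"
    and "c > 0"
    and "\<forall>\<^sub>F n in sequentially.
           ln n / real n powr ((real k - 1) / real k) \<le> p n
           \<and> p n \<le> 1 - c * (ln n)^4 / n"
    and "eps \<longlonglongrightarrow> 0"
  shows "\<exists>K. \<forall>\<^sub>F n in sequentially. \<forall>E v w.
           graph_class k n (p n) C (eps n) E \<longrightarrow> v < n \<longrightarrow> w < n \<longrightarrow> v \<noteq> w \<longrightarrow>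
           \<bar>hitting_time n E w v - real n\<bar> \<le> K * (p n * real n) ^ k"
  

proof -
  have k0: "k > 0" using assms(1) by simp
  obtain N0 :: nat where N0: "real N0 \<ge> (C\<^sup>2) ^ k" by (meson real_arch_simple)
  have ev: "\<forall>\<^sub>F n in sequentially. (ln n / real n powr ((real k - 1) / real k) \<le> p n)
      \<and> n \<ge> 3 \<and> n \<ge> N0"
    using assms(3) eventually_ge_at_top[of 3] eventually_ge_at_top[of N0]
    by eventually_elim auto
  show ?thesis
  proof (rule exI[of _ "real k * 2 ^ k + 1"], use ev in eventually_elim, intro allI impI)
    fix n :: nat and E v w
    assume H: "ln n / real n powr ((real k - 1) / real k) \<le> p n \<and> n \<ge> 3 \<and> n \<ge> N0"
      and G: "graph_class k n (p n) C (eps n) E" and vw: "v < n" "w < n" "v \<noteq> w"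
    define P where "P = p n * real n"
    have n3: "real n \<ge> 3" using H by simp
    have ln1: "ln (real n) \<ge> 1"
    proof -
      have "exp 1 \<le> real n" using exp_le n3 by linarith
      then show ?thesis using n3 by (subst ln_ge_iff) auto
    qed
    have npos: "real n > 0" using n3 by simp
    define r where "r = real n powr (1 / real k)"
    have r1: "r \<ge> 1" unfolding r_def using n3 k0 by (intro ge_one_powr_ge_zero) auto
    have rk: "r ^ k = real n" unfolding r_def using npos k0
      by (simp add: powr_power)
    have eq: "real n / real n powr ((real k - 1) / real k) = r"
    proof -
      have "real n = real n powr 1" using npos by simp
      then have "real n / real n powr ((real k - 1) / real k) = real n powr (1 - (real k - 1) / real k)"
        by (metis powr_diff)
      also have "1 - (real k - 1) / real k = 1 / real k" using k0 by (simp add: field_simps)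
      finally show ?thesis by (simp add: r_def)
    qed
    have PL: "P \<ge> r * ln n"
    proof -
      have "ln n / real n powr ((real k - 1) / real k) * real n \<le> p n * real n"
        using H npos by (intro mult_right_mono) auto
      moreover have "ln n / real n powr ((real k - 1) / real k) * real n = r * ln n"
        using eq by (metis times_divide_eq_left mult.commute)
      ultimately show ?thesis by (simp add: P_def)
    qed
    have "r \<le> r * ln n" using r1 ln1 by (simp add: mult_le_cancel_left1)
    then have Pr: "P \<ge> r" using PL by linarith
    have P1: "P \<ge> 1" using Pr r1 by linarith
    have nP: "real n \<le> P ^ k" using rk Pr r1 by (metis power_mono order_trans zero_le_one)
    have rC: "r \<ge> C\<^sup>2"
    proof -
      have "(C\<^sup>2) ^ k \<le> real n" using N0 H by linarith
      then have "((C\<^sup>2) ^ k) powr (1 / real k) \<le> r" unfolding r_def by (intro powr_mono2) auto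
      moreover have "((C\<^sup>2) ^ k) powr (1 / real k) = C\<^sup>2"
      proof (cases "C = 0")
        case False
        then have c2: "C\<^sup>2 > 0" by simp
        then have "(C\<^sup>2) ^ k = (C\<^sup>2) powr (real k)" by (simp add: powr_realpow)
        then have "((C\<^sup>2) ^ k) powr (1 / real k) = (C\<^sup>2) powr (real k * (1 / real k))"
          by (simp add: powr_powr)
        also have "real k * (1 / real k) = 1" using k0 by simp
        finally show ?thesis using c2 by simp
      qed (use k0 in simp)
      ultimately show ?thesis by simp
    qed
    have CP: "C * sqrt (P * ln n) \<le> P"
    proof -
      have "C\<^sup>2 * ln n \<le> P" using rC PL ln1 by (smt (verit) mult_right_mono)
      then have "C\<^sup>2 * (P * ln n) \<le> P * P" using P1 by (smt (verit) mult_left_mono mult.commute mult.assoc)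
      then have "sqrt (C\<^sup>2 * (P * ln n)) \<le> P" using P1 by (simp add: real_sqrt_le_iff sqrt_le_D power2_eq_square real_le_lsqrt)
      moreover have "C * sqrt (P * ln n) \<le> sqrt (C\<^sup>2 * (P * ln n))"
        unfolding real_sqrt_mult real_sqrt_abs using P1 ln1 by (intro mult_right_mono) auto
      ultimately show ?thesis by linarith
    qed
    from G have dm: "diam_le n E k"
      and dg: "\<forall>v<n. \<bar>real (deg n E v) - p n * n\<bar> \<le> C * sqrt (p n * n * ln n)"
      unfolding graph_class_def by auto
    have D: "\<forall>x<n. real (deg n E x) \<le> 2 * P"
      using dg CP unfolding P_def by (smt (verit))
    have core: "summable (\<lambda>t. real t * hit_prob n E v t w) \<and> hitting_time n E w v \<le> k * (2 * P) ^ k"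
      using hitting_core[OF dm _ vw(1,2) _ D] k0 P1 by simp
    have H0: "hitting_time n E w v \<ge> 0"
      unfolding hitting_time_def using core hit_nonneg by (intro suminf_nonneg) auto
    have "hitting_time n E w v \<le> real k * 2 ^ k * P ^ k" using core by (simp add: power_mult_distrib)
    then show "\<bar>hitting_time n E w v - real n\<bar> \<le> (real k * 2 ^ k + 1) * (p n * real n) ^ k"
      using H0 nP unfolding P_def[symmetric] by (simp add: algebra_simps abs_le_iff)
  qed
qed

end
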